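(* Let $E$ be a finite set and let $\mathcal{Q}\subseteq 2^E$ be a weakly Rayleigh set-system. If $\varnothing\in\mathcal{Q}$ and $E\in\mathcal{Q}$, then $\mathcal{Q}=2^E$.
   Context: For $\omega:2^E\to[0,\infty)$ not identically zero, $Z(\omega;\mathbf{y})=\sum_{S\subseteq E}\omega(S)\prod_{e\in S}y_e$. With $Z_e=\partial Z/\partial y_e$, $Z_{ef}=\partial^2Z/\partial y_e\partial y_f$, $\Delta Z\{e,f\}=Z_eZ_f-Z_{ef}Z$, $Z$ is Rayleigh if $\Delta Z\{e,f\}(\mathbf{y})\ge0$ for all distinct $e,f$ and all $\mathbf{y}$ with all $y_c>0$. $\mathcal{Q}$ is weakly Rayleigh if there is $\omega\ge0$ with $\{S:\omega(S)>0\}=\mathcal{Q}$ and $Z(\omega;\mathbf{y})$ Rayleigh. *)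

theory Defs
  imports "HOL-Analysis.Analysis"
begin

definition genZ :: "'a set \<Rightarrow> ('a set \<Rightarrow> real) \<Rightarrow> ('a \<Rightarrow> real) \<Rightarrow> real" where
  "genZ E \<omega> y = (\<Sum>S\<in>Pow E. \<omega> S * (\<Prod>e\<in>S. y e))"

definition pderivZ :: "'a \<Rightarrow> (('a \<Rightarrow> real) \<Rightarrow> real) \<Rightarrow> ('a \<Rightarrow> real) \<Rightarrow> real" where
  "pderivZ e F y = deriv (\<lambda>t. F (y(e := t))) (y e)"

definition rayleigh_diff :: "'a set \<Rightarrow> ('a set \<Rightarrow> real) \<Rightarrow> 'a \<Rightarrow> 'a \<Rightarrow> ('a \<Rightarrow> real) \<Rightarrow> real" where
  "rayleigh_diff E \<omega> e f y =
     pderivZ e (genZ E \<omega>) y * pderivZ f (genZ E \<omega>) y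
     - pderivZ e (pderivZ f (genZ E \<omega>)) y * genZ E \<omega> y"

definition rayleigh :: "'a set \<Rightarrow> ('a set \<Rightarrow> real) \<Rightarrow> bool" where
  "rayleigh E \<omega> \<longleftrightarrow>
     (\<forall>e\<in>E. \<forall>f\<in>E. e \<noteq> f \<longrightarrow>
        (\<forall>y. (\<forall>c\<in>E. y c > 0) \<longrightarrow> rayleigh_diff E \<omega> e f y \<ge> 0))"

definition weakly_rayleigh :: "'a set \<Rightarrow> 'a set set \<Rightarrow> bool" where
  "weakly_rayleigh E Q \<longleftrightarrow>
     (\<exists>\<omega> :: 'a set \<Rightarrow> real.
        (\<forall>S\<in>Pow E. \<omega> S \<ge> 0) \<and> (\<exists>S\<in>Pow E. \<omega> S \<noteq> 0) \<and>
        {S\<in>Pow E. \<omega> S > 0} = Q \<and> rayleigh E \<omega>)"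

end

theory Submission
  imports Defs
begin

lemma genZ_split:
  assumes "finite E" "e \<in> E"
  shows "genZ E \<omega> y = genZ (E - {e}) \<omega> y + y e * genZ (E - {e}) (\<lambda>S. \<omega> (insert e S)) y"
proof -
  let ?E' = "E - {e}"
  have E: "E = insert e ?E'" using assms by auto
  have fin: "finite ?E'" using assms by auto
  have P: "Pow E = Pow ?E' \<union> insert e ` Pow ?E'" by (subst E, rule Pow_insert)
  have disj: "Pow ?E' \<inter> insert e ` Pow ?E' = {}" by auto
  have inj: "inj_on (insert e) (Pow ?E')" unfolding inj_on_def by blast
  have "genZ E \<omega> y = (\<Sum>S\<in>Pow ?E'. \<omega> S * prod y S) + (\<Sum>S\<in>insert e ` Pow ?E'. \<omega> S * prod y S)"
    unfolding genZ_def P by (rule sum.union_disjoint) (use fin disj in auto)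
  also have "(\<Sum>S\<in>insert e ` Pow ?E'. \<omega> S * prod y S) = (\<Sum>S\<in>Pow ?E'. \<omega> (insert e S) * prod y (insert e S))"
    by (simp add: sum.reindex[OF inj])
  also have "\<dots> = (\<Sum>S\<in>Pow ?E'. y e * (\<omega> (insert e S) * prod y S))"
  proof (rule sum.cong[OF refl])
    fix S assume "S \<in> Pow ?E'"
    then have "finite S" "e \<notin> S" using fin finite_subset by auto
    then show "\<omega> (insert e S) * prod y (insert e S) = y e * (\<omega> (insert e S) * prod y S)" by simp
  qed
  finally show ?thesis unfolding genZ_def by (simp add: sum_distrib_left)
qed

lemma genZ_cong: "(\<And>c. c \<in> E \<Longrightarrow> y c = y' c) \<Longrightarrow> genZ E \<omega> y = genZ E \<omega> y'"
  unfolding genZ_def by (intro sum.cong refl arg_cong2[where f="(*)"] prod.cong) auto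

lemma pderiv_genZ:
  assumes "finite E" "e \<in> E"
  shows "pderivZ e (genZ E \<omega>) = genZ (E - {e}) (\<lambda>S. \<omega> (insert e S))"
proof
  fix y
  let ?a = "genZ (E - {e}) \<omega> y" and ?b = "genZ (E - {e}) (\<lambda>S. \<omega> (insert e S)) y"
  have "\<And>t. genZ E \<omega> (y(e := t)) = ?a + t * ?b"
  proof -
    fix t
    have 1: "genZ (E - {e}) \<omega> (y(e := t)) = ?a" by (rule genZ_cong) auto
    have 2: "genZ (E - {e}) (\<lambda>S. \<omega> (insert e S)) (y(e := t)) = ?b" by (rule genZ_cong) auto
    show "genZ E \<omega> (y(e := t)) = ?a + t * ?b"
      by (subst genZ_split[OF assms]) (simp add: 1 2)
  qed
  then have "(\<lambda>t. genZ E \<omega> (y(e := t))) = (\<lambda>t. ?a + t * ?b)" by auto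
  moreover have "deriv (\<lambda>t. ?a + t * ?b) (y e) = ?b"
    by (rule DERIV_imp_deriv) (auto intro!: derivative_eq_intros)
  ultimately show "pderivZ e (genZ E \<omega>) y = ?b" unfolding pderivZ_def by simp
qed

lemma rd_eq:
  assumes "finite E" "e \<in> E" "f \<in> E" "e \<noteq> f"
  shows "rayleigh_diff E \<omega> e f y =
    genZ (E - {e} - {f}) (\<lambda>S. \<omega> (insert e S)) y * genZ (E - {e} - {f}) (\<lambda>S. \<omega> (insert f S)) y
    - genZ (E - {e} - {f}) \<omega> y * genZ (E - {e} - {f}) (\<lambda>S. \<omega> (insert e (insert f S))) y"
proof -
  let ?F = "E - {e} - {f}"
  have F: "E - {f} - {e} = ?F" by auto
  have ic: "(\<lambda>S. \<omega> (insert f (insert e S))) = (\<lambda>S. \<omega> (insert e (insert f S)))"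
    by (simp add: insert_commute)
  have fe: "finite (E - {e})" "finite (E - {f})" using assms by auto
  have ee: "f \<in> E - {e}" "e \<in> E - {f}" using assms by auto
  have Ze: "pderivZ e (genZ E \<omega>) y = genZ ?F (\<lambda>S. \<omega> (insert e S)) y + y f * genZ ?F (\<lambda>S. \<omega> (insert e (insert f S))) y"
    unfolding pderiv_genZ[OF assms(1,2)] by (subst genZ_split[OF fe(1) ee(1)]) simp
  have Zf: "pderivZ f (genZ E \<omega>) y = genZ ?F (\<lambda>S. \<omega> (insert f S)) y + y e * genZ ?F (\<lambda>S. \<omega> (insert e (insert f S))) y"
    unfolding pderiv_genZ[OF assms(1,3)] by (subst genZ_split[OF fe(2) ee(2)]) (simp add: F ic)
  have Zef: "pderivZ e (pderivZ f (genZ E \<omega>)) y = genZ ?F (\<lambda>S. \<omega> (insert e (insert f S))) y"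
    unfolding pderiv_genZ[OF assms(1,3)] pderiv_genZ[OF fe(2) ee(2)] by (simp add: F ic)
  have Z: "genZ E \<omega> y = (genZ ?F \<omega> y + y f * genZ ?F (\<lambda>S. \<omega> (insert f S)) y)
      + y e * (genZ ?F (\<lambda>S. \<omega> (insert e S)) y + y f * genZ ?F (\<lambda>S. \<omega> (insert e (insert f S))) y)"
    apply (subst genZ_split[OF assms(1,2)])
    apply (subst genZ_split[OF fe(1) ee(1)])
    apply (subst genZ_split[OF fe(1) ee(1)])
    by simp
  show ?thesis unfolding rayleigh_diff_def Ze Zf Zef Z by (simp add: algebra_simps)
qed

lemma key:
  assumes fin: "finite E" and nn: "\<forall>S\<in>Pow E. \<omega> S \<ge> 0" and ray: "rayleigh E \<omega>"
    and TU: "T \<subseteq> U" "U \<subseteq> E" and pT: "\<omega> T > 0" and pU: "\<omega> U > 0"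
    and e: "e \<in> U" "e \<notin> T" and f: "f \<in> U" "f \<notin> T" and ef: "e \<noteq> f"
  shows "\<exists>S. T \<subseteq> S \<and> S \<subseteq> U \<and> e \<in> S \<and> f \<notin> S \<and> \<omega> S > 0"
proof (rule ccontr)
  assume H: "\<not> ?thesis"
  have Z: "\<omega> S = 0" if "T \<subseteq> S" "S \<subseteq> U" "e \<in> S" "f \<notin> S" for S
  proof -
    have "\<not> \<omega> S > 0" using H that by blast
    moreover have "S \<in> Pow E" using that TU by auto
    then have "\<omega> S \<ge> 0" using nn by blast
    ultimately show ?thesis by linarith
  qed
  let ?F = "E - {e} - {f}"
  have finF: "finite ?F" using fin by auto
  have finT: "finite T" using fin TU finite_subset by blast
  define K1 where "K1 = (\<Sum>S\<in>Pow ?F. \<omega> (insert e S))"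
  define K2 where "K2 = (\<Sum>S\<in>Pow ?F. \<omega> (insert f S))"
  define M where "M = max 1 (K1*K2/(\<omega> T * \<omega> U) + 1)"
  have M1: "M \<ge> 1" and Mbig: "M > K1*K2/(\<omega> T * \<omega> U)" unfolding M_def by auto
  define y where "y c = (if c\<in>T then M else if c\<in>U then 1 else 1/M)" for c
  have ypos: "y c > 0" for c using M1 unfolding y_def by auto
  have yle: "y c \<le> (if c \<in> T then M else 1)" for c using M1 unfolding y_def by auto
  have Pgen: "prod y S \<le> M ^ card (S \<inter> T)" if "finite S" for S
  proof -
    have "prod y S \<le> prod (\<lambda>c. if c \<in> T then M else 1) S"
      by (rule prod_mono) (use ypos yle less_imp_le in blast)
    also have "\<dots> = prod (\<lambda>c. M) (S \<inter> T)"
      by (rule prod.inter_restrict[symmetric]) (rule that)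
    finally show ?thesis by simp
  qed
  have Pall: "prod y S \<le> M ^ card T" if "finite S" for S
  proof -
    have "card (S \<inter> T) \<le> card T" by (rule card_mono[OF finT]) auto
    then have "M ^ card (S \<inter> T) \<le> M ^ card T" using M1 by (rule power_increasing)
    then show ?thesis using Pgen[OF that] by linarith
  qed
  have Pstrict: "prod y S * M \<le> M ^ card T" if "finite S" "\<not> T \<subseteq> S \<or> \<not> S \<subseteq> U" for S
    using that(2)
  proof
    assume "\<not> T \<subseteq> S"
    then have "S \<inter> T \<subset> T" by auto
    then have "card (S \<inter> T) < card T" by (rule psubset_card_mono[OF finT])
    then have "M ^ Suc (card (S \<inter> T)) \<le> M ^ card T" using M1 by (intro power_increasing) auto
    moreover have "prod y S * M \<le> M ^ card (S \<inter> T) * M"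
      using Pgen[OF that(1)] M1 by (intro mult_right_mono) auto
    ultimately show ?thesis by (simp add: mult.commute)
  next
    assume "\<not> S \<subseteq> U"
    then obtain c where c: "c \<in> S" "c \<notin> U" by auto
    then have yc: "y c = 1/M" using TU unfolding y_def by auto
    have "prod y S = y c * prod y (S - {c})" by (rule prod.remove[OF that(1) c(1)])
    also have "\<dots> \<le> (1/M) * M ^ card T"
      unfolding yc using Pall[of "S - {c}"] that(1) M1 by (intro mult_left_mono) auto
    finally show ?thesis using M1 by (simp add: field_simps)
  qed
  have PT: "prod y T = M ^ card T"
    by (simp add: y_def)
  have PU: "prod y (U - {e} - {f}) = M ^ card T"
  proof -
    have fU: "finite (U - {e} - {f})" using fin TU finite_subset by blast
    have sub: "T \<subseteq> U - {e} - {f}" using TU e f by auto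
    have "prod y (U - {e} - {f}) = prod y (U - {e} - {f} - T) * prod y T"
      by (rule prod.subset_diff[OF sub fU])
    also have "prod y (U - {e} - {f} - T) = 1"
      by (rule prod.neutral) (auto simp: y_def)
    finally show ?thesis using PT by simp
  qed
  have yE: "\<forall>c\<in>E. y c > 0" using ypos by auto
  have eE: "e \<in> E" "f \<in> E" using e f TU by auto
  have "rayleigh_diff E \<omega> e f y \<ge> 0" using ray eE ef yE unfolding rayleigh_def by blast
  then have ineq: "genZ ?F \<omega> y * genZ ?F (\<lambda>S. \<omega> (insert e (insert f S))) y
     \<le> genZ ?F (\<lambda>S. \<omega> (insert e S)) y * genZ ?F (\<lambda>S. \<omega> (insert f S)) y"
    unfolding rd_eq[OF fin eE ef] by simp
  have nnF: "\<omega> S \<ge> 0" "\<omega> (insert e S) \<ge> 0" "\<omega> (insert f S) \<ge> 0" "\<omega> (insert e (insert f S)) \<ge> 0"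
    if "S \<in> Pow ?F" for S using nn that eE by auto
  have Pnn: "prod y S \<ge> 0" for S using ypos by (simp add: prod_nonneg less_imp_le)
  have A: "\<omega> T * M ^ card T \<le> genZ ?F \<omega> y"
  proof -
    have "T \<in> Pow ?F" using TU e f by auto
    then have "\<omega> T * prod y T \<le> genZ ?F \<omega> y" unfolding genZ_def
      by (intro member_le_sum finite_Pow_iff[THEN iffD2, OF finF]) (use nnF Pnn in auto)
    then show ?thesis using PT by simp
  qed
  have D: "\<omega> U * M ^ card T \<le> genZ ?F (\<lambda>S. \<omega> (insert e (insert f S))) y"
  proof -
    have "U - {e} - {f} \<in> Pow ?F" using TU by auto
    moreover have "insert e (insert f (U - {e} - {f})) = U" using e f by auto
    ultimately have "\<omega> U * prod y (U - {e} - {f}) \<le> genZ ?F (\<lambda>S. \<omega> (insert e (insert f S))) y" 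
      unfolding genZ_def
      by (metis (no_types, lifting) member_le_sum finite_Pow_iff[THEN iffD2, OF finF] nnF(4) Pnn mult_nonneg_nonneg DiffD1)
    then show ?thesis using PU by simp
  qed
  have B: "genZ ?F (\<lambda>S. \<omega> (insert e S)) y * M \<le> K1 * M ^ card T"
  proof -
    have "genZ ?F (\<lambda>S. \<omega> (insert e S)) y * M = (\<Sum>S\<in>Pow ?F. \<omega> (insert e S) * (prod y S * M))"
      unfolding genZ_def by (simp add: sum_distrib_right mult.assoc)
    also have "\<dots> \<le> (\<Sum>S\<in>Pow ?F. \<omega> (insert e S) * M ^ card T)"
    proof (rule sum_mono)
      fix S assume S: "S \<in> Pow ?F"
      show "\<omega> (insert e S) * (prod y S * M) \<le> \<omega> (insert e S) * M ^ card T"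
      proof (cases "\<omega> (insert e S) = 0")
        case False
        have "f \<notin> insert e S" using S ef by auto
        then have "\<not> T \<subseteq> insert e S \<or> \<not> insert e S \<subseteq> U" using Z False by blast
        then have "\<not> T \<subseteq> S \<or> \<not> S \<subseteq> U" using e by auto
        moreover have "finite S" using S finF by (auto intro: finite_subset)
        ultimately show ?thesis using Pstrict nnF(2)[OF S] by (intro mult_left_mono) auto
      qed simp
    qed
    finally show ?thesis unfolding K1_def by (simp add: sum_distrib_right)
  qed
  have C: "genZ ?F (\<lambda>S. \<omega> (insert f S)) y \<le> K2 * M ^ card T"
  proof -
    have "genZ ?F (\<lambda>S. \<omega> (insert f S)) y \<le> (\<Sum>S\<in>Pow ?F. \<omega> (insert f S) * M ^ card T)"
      unfolding genZ_def
    proof (rule sum_mono)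
      fix S assume S: "S \<in> Pow ?F"
      have "finite S" using S finF by (auto intro: finite_subset)
      then show "\<omega> (insert f S) * (\<Prod>e\<in>S. y e) \<le> \<omega> (insert f S) * M ^ card T"
        using Pall nnF(3)[OF S] by (intro mult_left_mono) auto
    qed
    then show ?thesis unfolding K2_def by (simp add: sum_distrib_right)
  qed
  have Cnn: "genZ ?F (\<lambda>S. \<omega> (insert f S)) y \<ge> 0" unfolding genZ_def
    using nnF Pnn by (intro sum_nonneg mult_nonneg_nonneg) auto
  have K1nn: "K1 * M ^ card T \<ge> 0" unfolding K1_def using nnF M1 by (intro mult_nonneg_nonneg sum_nonneg) auto
  have Mt: "M ^ card T > 0" using M1 by simp
  have "\<omega> T * M ^ card T > 0" using pT Mt by simp
  then have Ann: "genZ ?F \<omega> y \<ge> 0" using A by linarith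
  have "(\<omega> T * M ^ card T) * (\<omega> U * M ^ card T) * M \<le> genZ ?F \<omega> y * genZ ?F (\<lambda>S. \<omega> (insert e (insert f S))) y * M"
    using A D pT pU Mt M1 Ann by (intro mult_right_mono mult_mono) auto
  also have "\<dots> \<le> (genZ ?F (\<lambda>S. \<omega> (insert e S)) y * M) * genZ ?F (\<lambda>S. \<omega> (insert f S)) y"
    using ineq M1 by (simp add: mult_right_mono mult.commute mult.left_commute)
  also have "\<dots> \<le> (K1 * M ^ card T) * (K2 * M ^ card T)"
    by (rule mult_mono[OF B C K1nn Cnn])
  finally have "(\<omega> T * \<omega> U * M) * (M ^ card T * M ^ card T) \<le> (K1 * K2) * (M ^ card T * M ^ card T)"
    by (simp add: algebra_simps)
  then have "\<omega> T * \<omega> U * M \<le> K1 * K2" using Mt by (simp add: mult_le_cancel_right)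
  then have "M \<le> K1 * K2 / (\<omega> T * \<omega> U)" using pT pU by (simp add: field_simps)
  then show False using Mbig by simp
qed



lemma interval:
  assumes fin: "finite E" and nn: "\<forall>S\<in>Pow E. \<omega> S \<ge> 0" and ray: "rayleigh E \<omega>"
  shows "\<forall>T U. T \<subseteq> U \<longrightarrow> U \<subseteq> E \<longrightarrow> \<omega> T > 0 \<longrightarrow> \<omega> U > 0 \<longrightarrow> card (U - T) = n
     \<longrightarrow> (\<forall>X. T \<subseteq> X \<longrightarrow> X \<subseteq> U \<longrightarrow> \<omega> X > 0)"
proof (induction n rule: less_induct)
  case (less n)
  show ?case
  proof (intro allI impI)
    fix T U X
    assume h: "T \<subseteq> U" "U \<subseteq> E" "\<omega> T > 0" "\<omega> U > 0" "card (U - T) = n" "T \<subseteq> X" "X \<subseteq> U"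
    show "\<omega> X > 0"
    proof (cases "X = T \<or> X = U")
      case True thus ?thesis using h by auto
    next
      case False
      then obtain e where e: "e \<in> X" "e \<notin> T" using h by blast
      obtain f where f: "f \<in> U" "f \<notin> X" using h False by blast
      have ef: "e \<noteq> f" using e f by auto
      have eU: "e \<in> U" using e h by blast
      have fT: "f \<notin> T" using f h by blast
      have finUT: "finite (U - T)" using fin h finite_subset by blast
      obtain S where S: "T \<subseteq> S" "S \<subseteq> U" "e \<in> S" "f \<notin> S" "\<omega> S > 0"
        using key[OF fin nn ray h(1,2,3,4) eU e(2) f(1) fT ef] by blast
      have c1: "card (S - T) < n" unfolding h(5)[symmetric]
        by (rule psubset_card_mono[OF finUT]) (use S f h in blast)
      have c2: "card (U - S) < n" unfolding h(5)[symmetric]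
        by (rule psubset_card_mono[OF finUT]) (use S e h in blast)
      have c3: "card ((U - {f}) - insert e T) < n" unfolding h(5)[symmetric]
        by (rule psubset_card_mono[OF finUT]) (use e h in blast)
      have p1: "\<omega> (insert e T) > 0"
        by (rule less.IH[OF c1, rule_format, of T S "insert e T"]) (use S h e in auto)
      have p2: "\<omega> (U - {f}) > 0"
        by (rule less.IH[OF c2, rule_format, of S U "U - {f}"]) (use S h f in auto)
      show ?thesis
        by (rule less.IH[OF c3, rule_format, of "insert e T" "U - {f}" X]) (use p1 p2 e f h in auto)
    qed
  qed
qed

theorem theorem4p2:
  fixes E :: "'a set" and Q :: "'a set set"
  assumes "finite E"
    and "Q \<subseteq> Pow E"
    and "weakly_rayleigh E Q"
    and "{} \<in> Q"
    and "E \<in> Q"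
  shows "Q = Pow E"
proof -
  obtain \<omega> :: "'a set \<Rightarrow> real" where nn: "\<forall>S\<in>Pow E. \<omega> S \<ge> 0"
    and Q: "{S\<in>Pow E. \<omega> S > 0} = Q" and ray: "rayleigh E \<omega>"
    using assms(3) unfolding weakly_rayleigh_def by blast
  have "\<omega> {} > 0" "\<omega> E > 0" using assms(4,5) Q by auto
  then have "\<forall>X. {} \<subseteq> X \<longrightarrow> X \<subseteq> E \<longrightarrow> \<omega> X > 0"
    using interval[OF assms(1) nn ray, of "card (E - {})", rule_format, of "{}" E] by auto
  then show ?thesis using Q by auto
qed

end
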